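(* Let $q$ be a prime power and $f:\mathbb{F}_q\to\mathbb{F}_q$ be differentially $d$-uniform. Then \[|\mathrm{Im}(f)|\geq \left\lceil\frac{q}{d+1}\right\rceil.\] Moreover, if $|\mathrm{Im}(f)|=\left\lceil\frac{q}{d+1}\right\rceil=\frac{q+\varepsilon}{d+1}$ with $1\leq\varepsilon\leq d$, then \[\sum_{y\in\mathrm{Im}(f)}(\omega(y)-(d+1))^2\leq (d+1)(\varepsilon-1)+1.\]
   Context: A map $f:\mathbb{F}_q\to\mathbb{F}_q$ is called differentially $d$-uniform ($d$-uniform) if $d=\max_{a\neq 0,\,b\in\mathbb{F}_q}|\{x\in\mathbb{F}_q: f(x+a)-f(x)=b\}|$. $\mathrm{Im}(f)$ is the image set of $f$, and for $y\in\mathbb{F}_q$, $\omega(y)=|f^{-1}(\{y\})|$ is the number of preimages of $y$ under $f$. *)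

theory Defs
  imports Complex_Main
begin

text \<open>The finite field F_q is modelled as a type of class {field, finite}; q = CARD('a).
  Every finite field has prime power order, so "q a prime power" is automatic.\<close>

definition diff_uniformity :: "('a::{field,finite} \<Rightarrow> 'a) \<Rightarrow> nat" where
  "diff_uniformity f =
     Max {card {x. f (x + a) - f x = b} | a b. a \<noteq> 0}"

definition diff_uniform :: "('a::{field,finite} \<Rightarrow> 'a) \<Rightarrow> nat \<Rightarrow> bool" where
  "diff_uniform f d \<longleftrightarrow> d = diff_uniformity f"

definition preimage_count :: "('a \<Rightarrow> 'b) \<Rightarrow> 'b \<Rightarrow> nat" where
  "preimage_count f y = card (f -` {y})"

end

theory Submission
  imports Defs
begin

lemma fiber_sum:
  fixes f :: "'a::finite \<Rightarrow> 'b"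
  shows "(\<Sum>y\<in>range f. int (preimage_count f y)) = int (card (UNIV::'a set))"
proof -
  have e: "UNIV = (\<Union>y\<in>range f. f -` {y})" by blast
  have "card (\<Union>y\<in>range f. f -` {y}) = (\<Sum>y\<in>range f. card (f -` {y}))"
    by (rule card_UN_disjoint) (auto)
  then show ?thesis unfolding preimage_count_def e[symmetric] by (metis of_nat_sum)
qed

lemma pairs_fiber:
  fixes f :: "'a::finite \<Rightarrow> 'b"
  shows "card {(x,z). f x = f z} = (\<Sum>y\<in>range f. (preimage_count f y)^2)"
proof -
  have "{(x,z). f x = f z} = (\<Union>y\<in>range f. (f -` {y}) \<times> (f -` {y}))" by auto
  hence "card {(x,z). f x = f z} = card (\<Union>y\<in>range f. (f -` {y}) \<times> (f -` {y}))" by simp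
  also have "\<dots> = (\<Sum>y\<in>range f. card ((f -` {y}) \<times> (f -` {y})))"
    by (rule card_UN_disjoint) auto
  finally show ?thesis unfolding preimage_count_def by (simp add: card_cartesian_product power2_eq_square)
qed

lemma pairs_shift:
  fixes f :: "'a::{field,finite} \<Rightarrow> 'a"
  shows "card {(x,z). f x = f z} = (\<Sum>a\<in>UNIV. card {x. f (x + a) - f x = 0})"
proof -
  have "bij_betw (\<lambda>(x,z). (z - x, x)) {(x,z). f x = f z} (SIGMA a:UNIV. {x. f (x + a) - f x = 0})"
    by (rule bij_betw_byWitness[where f'="\<lambda>(a,x). (x, x + a)"]) auto
  hence "card {(x,z). f x = f z} = card (SIGMA a:UNIV. {x. f (x + a) - f x = 0})"
    by (rule bij_betw_same_card)
  also have "\<dots> = (\<Sum>a\<in>UNIV. card {x. f (x + a) - f x = 0})"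
    by (rule card_SigmaI) auto
  finally show ?thesis .
qed

lemma sq_bound:
  fixes f :: "'a::{field,finite} \<Rightarrow> 'a"
  assumes "diff_uniform f d"
  shows "(\<Sum>y\<in>range f. (preimage_count f y)^2) \<le> card (UNIV::'a set) + (card (UNIV::'a set) - 1) * d"
proof -
  let ?g = "\<lambda>a. card {x. f (x + a) - f x = 0}"
  have fin: "finite {card {x. f (x + a) - f x = b} |a b. a \<noteq> (0::'a)}"
  proof (rule finite_subset)
    show "{card {x. f (x + a) - f x = b} |a b. a \<noteq> (0::'a)} \<subseteq> (\<lambda>(a,b). card {x. f (x + a) - f x = b}) ` UNIV"
      by auto
  qed simp
  have le: "?g a \<le> d" if "a \<noteq> 0" for a
  proof -
    have "?g a \<in> {card {x. f (x + a) - f x = b} |a b. a \<noteq> (0::'a)}" using that by blast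
    moreover have "d = Max {card {x. f (x + a) - f x = b} |a b. a \<noteq> (0::'a)}"
      using assms unfolding diff_uniform_def diff_uniformity_def by simp
    ultimately show ?thesis using Max_ge[OF fin] by simp
  qed
  have "(\<Sum>a\<in>UNIV. ?g a) = ?g 0 + (\<Sum>a\<in>UNIV - {0}. ?g a)"
    by (rule sum.remove) auto
  also have "?g 0 = card (UNIV::'a set)" by simp
  also have "(\<Sum>a\<in>UNIV - {0}. ?g a) \<le> (\<Sum>a\<in>UNIV - {0::'a}. d)"
    by (rule sum_mono) (use le in auto)
  also have "\<dots> = (card (UNIV::'a set) - 1) * d" by (simp add: card_Diff_singleton)
  finally show ?thesis using pairs_fiber[of f] pairs_shift[of f] by simp
qed

theorem theorem2p6:
  fixes f :: "'a::{field,finite} \<Rightarrow> 'a" and d :: nat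
  assumes "diff_uniform f d"
  shows "int (card (range f)) \<ge> \<lceil>real (card (UNIV :: 'a set)) / real (d + 1)\<rceil>
     \<and> (\<forall>\<epsilon>::nat.
          int (card (range f)) = \<lceil>real (card (UNIV :: 'a set)) / real (d + 1)\<rceil> \<and>
          real (card (range f)) = (real (card (UNIV :: 'a set)) + real \<epsilon>) / real (d + 1) \<and>
          1 \<le> \<epsilon> \<and> \<epsilon> \<le> d \<longrightarrow>
           (\<Sum>y\<in>range f. (int (preimage_count f y) - int (d + 1))^2)
             \<le> int (d + 1) * (int \<epsilon> - 1) + 1)"
proof -
  define q where "q = card (UNIV :: 'a set)"
  define n where "n = card (range f)"
  define S where "S = (\<Sum>y\<in>range f. int (preimage_count f y)^2)"
  define c where "c = int (d + 1)"
  have q1: "q \<ge> 1" unfolding q_def using finite_UNIV_card_ge_0[where 'a='a] by simp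
  have S: "S \<le> int q + (int q - 1) * int d"
  proof -
    have "S = int (\<Sum>y\<in>range f. (preimage_count f y)^2)" unfolding S_def by simp
    also have "\<dots> \<le> int (q + (q - 1) * d)" using sq_bound[OF assms] unfolding q_def by linarith
    finally show ?thesis using q1 by (simp add: of_nat_diff)
  qed
  have expand: "(\<Sum>y\<in>range f. (int (preimage_count f y) - c)^2) = S - 2 * c * int q + int n * c^2"
  proof -
    have "(\<Sum>y\<in>range f. (int (preimage_count f y) - c)^2)
        = (\<Sum>y\<in>range f. int (preimage_count f y)^2 - 2 * c * int (preimage_count f y) + c^2)"
      by (simp add: power2_diff algebra_simps)
    also have "\<dots> = S - 2 * c * (\<Sum>y\<in>range f. int (preimage_count f y)) + int n * c^2"
      unfolding S_def n_def by (simp add: sum.distrib sum_subtractf sum_distrib_left)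
    finally show ?thesis using fiber_sum[of f] unfolding q_def by simp
  qed
  have nn: "0 \<le> (\<Sum>y\<in>range f. (int (preimage_count f y) - c)^2)" by (simp add: sum_nonneg)
  have c: "c = int d + 1" unfolding c_def by simp
  have "int n * c * c \<ge> c * int q + int d"
    using nn expand S unfolding c power2_eq_square by (simp add: algebra_simps)
  hence "c * int q \<le> c * (int n * c)" by (simp add: algebra_simps)
  moreover have "c > 0" using c by simp
  ultimately have "int n * c \<ge> int q" by simp
  hence "q \<le> n * (d + 1)" unfolding c by (metis of_nat_le_iff of_nat_mult of_nat_Suc Suc_eq_plus1 add.commute)
  hence part1: "real n * real (d + 1) \<ge> real q" by (metis of_nat_le_iff of_nat_mult)
  have P1: "int n \<ge> \<lceil>real q / real (d + 1)\<rceil>"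
    using part1 by (simp add: ceiling_le_iff divide_le_eq algebra_simps)
  have P2: "(\<Sum>y\<in>range f. (int (preimage_count f y) - int (d + 1))^2) \<le> int (d + 1) * (int \<epsilon> - 1) + 1"
    if h: "real n = (real q + real \<epsilon>) / real (d + 1)" for \<epsilon> :: nat
  proof -
    have "real n * real (d + 1) = real q + real \<epsilon>" using h by (simp add: field_simps)
    hence "int n * c = int q + int \<epsilon>" unfolding c_def by (metis of_int_eq_iff of_int_of_nat_eq of_int_mult of_int_add of_nat_mult of_nat_add)
    hence "int n * c * c = (int q + int \<epsilon>) * c" by simp
    thus ?thesis using expand S unfolding c_def[symmetric] c power2_eq_square by (simp add: algebra_simps)
  qed
  show ?thesis using P1 P2 unfolding q_def n_def by blast
qed

end
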